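(* Let $(T_1,T_2,T_3)$ be an associative Clifford extension over $(V,S^0,S^1)$. Then for any $v_1,v_2\in V$ the linear operator on $T_2$ given by $t\mapsto \big(v_1(v_2s^0)\big)\big(s^0t\big)$ is the same for all unit vectors $s^0\in S^0$. (Here $v_1(v_2s^0)\in S^0$, $s^0t\in T_1$, and the result lies in $T_2$.)
   Context: All spaces are finite-dimensional real Euclidean. For a Euclidean space $X$, $\mathrm{Cl}(X)$ is the Clifford algebra with $x\cdot x=-|x|^2$; a "$\mathrm{Cl}(X)$-module $Y\oplus Z$" is a $\mathbb Z/2$-graded module with $X\cdot Y\subset Z$, $X\cdot Z\subset Y$, $Y\perp Z$, each $x\in X$ acting skew-symmetrically; the action is written $xy$. Let $V\neq0$ be Euclidean and $S^0\oplus S^1$ a nonzero $\mathrm{Cl}(V)$-module. A Clifford extension over $(V,S^0,S^1)$ is a triple of Euclidean spaces $T_1,T_2,T_3$ of equal dimension together with a $\mathrm{Cl}(V)$-module structure on $T_2\oplus T_3$, a $\mathrm{Cl}(S^0)$-module structure on $T_1\oplus T_2$, and a $\mathrm{Cl}(S^1)$-module structure on $T_1\oplus T_3$. It is associative if $(vs^0)t_1=v(s^0t_1)$ for all $v\in V,s^0\in S^0,t_1\in T_1$. *)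

theory Defs
  imports "HOL-Analysis.Analysis"
begin

definition fin_dim :: "'a::real_inner itself \<Rightarrow> bool" where
  "fin_dim _ \<longleftrightarrow> (\<exists>B::'a set. finite B \<and> span B = UNIV)"

text \<open>A Z/2-graded Cl(X)-module Y (+) Z: the action of x on Y(+)Z is given by
  a x : Y -> Z and b x : Z -> Y, linear in x, with x.x = -|x|^2 and each x acting
  skew-symmetrically.  (Y and Z are distinct types, hence orthogonal.)\<close>
definition cl_module ::
  "('x::real_inner \<Rightarrow> 'y::real_inner \<Rightarrow> 'z::real_inner) \<Rightarrow> ('x \<Rightarrow> 'z \<Rightarrow> 'y) \<Rightarrow> bool" where
  "cl_module a b \<longleftrightarrow>
     bilinear a \<and> bilinear b \<and>
     (\<forall>x y. b x (a x y) = - ((norm x)\<^sup>2 *\<^sub>R y)) \<and>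
     (\<forall>x z. a x (b x z) = - ((norm x)\<^sup>2 *\<^sub>R z)) \<and>
     (\<forall>x y z. inner (a x y) z = - inner y (b x z))"

end

theory Submission
  imports Defs
begin

lemma bil_zero_left: "bilinear a \<Longrightarrow> a 0 y = 0"
  unfolding bilinear_def using linear_0 by blast

lemma bil_scale_left: "bilinear a \<Longrightarrow> a (c *\<^sub>R x) y = c *\<^sub>R a x y"
  unfolding bilinear_def using linear_scale by blast

lemma bil_scale_right: "bilinear a \<Longrightarrow> a x (c *\<^sub>R y) = c *\<^sub>R a x y"
  unfolding bilinear_def using linear_scale by blast

lemma key:
  assumes m1: "cl_module vS0 vS1" and m2: "cl_module vT2 vT3" and m3: "cl_module s0T1 s0T2"
    and assoc: "\<forall>v x y. s1T1 (vS0 v x) y = vT2 v (s0T1 x y)"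
  shows "s0T1 (vS1 v u) t1 = vT3 v (s1T1 u t1)"
proof (cases "v = 0")
  case True
  have b1: "bilinear vS1" and b2: "bilinear s0T1" and b3: "bilinear vT3"
    using m1 m2 m3 unfolding cl_module_def by auto
  show ?thesis using True bil_zero_left[OF b1] bil_zero_left[OF b2] bil_zero_left[OF b3] by simp
next
  case False
  define n where "n = (norm v)\<^sup>2"
  have n0: "n \<noteq> 0" using False n_def by simp
  have b0: "bilinear vS0" and b1: "bilinear vS1" and b2: "bilinear s0T1"
    using m1 m3 unfolding cl_module_def by auto
  have c1: "\<And>z. vS0 v (vS1 v z) = - (n *\<^sub>R z)"
    using m1 unfolding cl_module_def n_def by blast
  have c2: "\<And>z. vS1 v (vS0 v z) = - (n *\<^sub>R z)"
    using m1 unfolding cl_module_def n_def by blast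
  have c3: "\<And>z. vT3 v (vT2 v z) = - (n *\<^sub>R z)"
    using m2 unfolding cl_module_def n_def by blast
  define y where "y = (- 1 / n) *\<^sub>R vS1 v u"
  have "vS0 v y = (- 1 / n) *\<^sub>R vS0 v (vS1 v u)"
    unfolding y_def by (rule bil_scale_right[OF b0])
  also have "\<dots> = u" using c1 n0 by simp
  finally have u: "vS0 v y = u" .
  have vy: "vS1 v u = - (n *\<^sub>R y)"
    using c2[of y] u by simp
  have "s0T1 (vS1 v u) t1 = (- n) *\<^sub>R s0T1 y t1"
    using vy bil_scale_left[OF b2, of "- n" y t1] by simp
  also have "\<dots> = vT3 v (vT2 v (s0T1 y t1))"
    using c3 by simp
  also have "\<dots> = vT3 v (s1T1 u t1)" using assoc[rule_format, of v y t1] u by simp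
  finally show ?thesis .
qed

theorem mainTheorem7:
  fixes vS0 :: "'v::real_inner \<Rightarrow> 's0::real_inner \<Rightarrow> 's1::real_inner"
    and vS1 :: "'v \<Rightarrow> 's1 \<Rightarrow> 's0"
    and vT2 :: "'v \<Rightarrow> 't2::real_inner \<Rightarrow> 't3::real_inner"
    and vT3 :: "'v \<Rightarrow> 't3 \<Rightarrow> 't2"
    and s0T1 :: "'s0 \<Rightarrow> 't1::real_inner \<Rightarrow> 't2"
    and s0T2 :: "'s0 \<Rightarrow> 't2 \<Rightarrow> 't1"
    and s1T1 :: "'s1 \<Rightarrow> 't1 \<Rightarrow> 't3"
    and s1T3 :: "'s1 \<Rightarrow> 't3 \<Rightarrow> 't1"
    and v1 v2 :: 'v and s s' :: 's0 and t :: 't2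
  assumes "fin_dim TYPE('v)" and "fin_dim TYPE('s0)" and "fin_dim TYPE('s1)"
    and "fin_dim TYPE('t1)" and "fin_dim TYPE('t2)" and "fin_dim TYPE('t3)"
    and "\<exists>v::'v. v \<noteq> 0"
    and "(\<exists>x::'s0. x \<noteq> 0) \<or> (\<exists>y::'s1. y \<noteq> 0)"
    and "cl_module vS0 vS1"
    and "dim (UNIV::'t1 set) = dim (UNIV::'t2 set)"
    and "dim (UNIV::'t2 set) = dim (UNIV::'t3 set)"
    and "cl_module vT2 vT3"
    and "cl_module s0T1 s0T2"
    and "cl_module s1T1 s1T3"
    and assoc: "\<forall>v x y. s1T1 (vS0 v x) y = vT2 v (s0T1 x y)"
    and "norm s = 1" and "norm s' = 1"
  shows "s0T1 (vS1 v1 (vS0 v2 s)) (s0T2 s t) = s0T1 (vS1 v1 (vS0 v2 s')) (s0T2 s' t)"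
proof -
  have gen: "s0T1 (vS1 v1 (vS0 v2 r)) (s0T2 r t) = - vT3 v1 (vT2 v2 t)" if "norm r = 1" for r
  proof -
    have "s0T1 (vS1 v1 (vS0 v2 r)) (s0T2 r t) = vT3 v1 (s1T1 (vS0 v2 r) (s0T2 r t))"
      using key[OF assms(9) assms(12) assms(13) assoc] by blast
    also have "\<dots> = vT3 v1 (vT2 v2 (s0T1 r (s0T2 r t)))" using assoc by simp
    also have "s0T1 r (s0T2 r t) = - t" proof -
      have "\<And>z. s0T1 r (s0T2 r z) = - ((norm r)\<^sup>2 *\<^sub>R z)"
        using assms(13) unfolding cl_module_def by blast
      then show ?thesis using that by simp
    qed
    also have "vT2 v2 (- t) = - vT2 v2 t"
      using assms(12) unfolding cl_module_def bilinear_def by (simp add: linear_neg)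
    also have "vT3 v1 (- vT2 v2 t) = - vT3 v1 (vT2 v2 t)"
      using assms(12) unfolding cl_module_def bilinear_def by (simp add: linear_neg)
    finally show ?thesis .
  qed
  show ?thesis using gen assms(16,17) by simp
qed

end
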